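(* Let $W$ be a finite-dimensional real inner-product space, $\tau>0$, $\mathcal{Q},\mathcal{K}:W\to\mathbb{R}^{d_k}$ and $\mathcal{V}:W\to\mathbb{R}^{d_v}$ linear maps, and $\mu$ a Borel probability measure on $W$ with bounded support. Let $z_1,z_2,\dots$ be i.i.d. random variables with law $\mu$. Then, almost surely, $$\frac1N\sum_{j=1}^N\frac{\sum_{i=1}^N\exp(\langle\mathcal{Q}z_j,\mathcal{K}z_i\rangle/\tau)\,\mathcal{V}z_i}{\sum_{t=1}^N\exp(\langle\mathcal{Q}z_j,\mathcal{K}z_t\rangle/\tau)}\;\xrightarrow[N\to\infty]{}\;\int_W\frac{\int_W\exp(\langle\mathcal{Q}z,\mathcal{K}z'\rangle/\tau)\,\mathcal{V}z'\,\mu(dz')}{\int_W\exp(\langle\mathcal{Q}z,\mathcal{K}s\rangle/\tau)\,\mu(ds)}\,\mu(dz).$$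
   Context: Integrals of $\mathbb{R}^{d_v}$-valued functions are taken componentwise; $\langle\cdot,\cdot\rangle$ is the Euclidean inner product on $\mathbb{R}^{d_k}$. *)

theory Defs
  imports "HOL-Probability.Probability"
begin

end

theory Submission
  imports Defs
begin


lemma (in prob_space) slln_moments:
  fixes Y :: "nat \<Rightarrow> 'a \<Rightarrow> real"
  assumes ind: "indep_vars (\<lambda>_. borel) Y UNIV"
    and meas: "\<And>i. Y i \<in> borel_measurable M"
    and bnd: "\<And>i. AE \<omega> in M. \<bar>Y i \<omega>\<bar> \<le> c"
    and mean0: "\<And>i. expectation (Y i) = 0"
    and c: "c \<ge> 0"
  shows "expectation (\<lambda>\<omega>. (\<Sum>i\<in>{1..n}. Y i \<omega>) ^ 2) \<le> real n * c^2 \<and>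
         expectation (\<lambda>\<omega>. (\<Sum>i\<in>{1..n}. Y i \<omega>) ^ 4) \<le> 3 * (real n)^2 * c^4"
proof -
  define S where "S n \<omega> = (\<Sum>i\<in>{1..n}. Y i \<omega>)" for n \<omega>
  have Smeas: "S n \<in> borel_measurable M" for n
    unfolding S_def using meas by (intro borel_measurable_sum) auto
  have G: "AE \<omega> in M. \<forall>i. \<bar>Y i \<omega>\<bar> \<le> c"
    using bnd by (simp add: AE_all_countable)
  have SbP: "\<bar>S n \<omega>\<bar> \<le> real n * c" if "\<forall>i. \<bar>Y i \<omega>\<bar> \<le> c" for n \<omega>
  proof -
    have "\<bar>S n \<omega>\<bar> \<le> (\<Sum>i\<in>{1..n}. \<bar>Y i \<omega>\<bar>)" unfolding S_def by (rule sum_abs)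
    also have "\<dots> \<le> (\<Sum>i\<in>{1..n}. c)" using that by (intro sum_mono) auto
    finally show ?thesis by simp
  qed
  have intS: "integrable M (\<lambda>\<omega>. S n \<omega> ^ k)" for n k
  proof (rule integrable_const_bound[where B="(real n * c)^k"])
    show "AE \<omega> in M. norm (S n \<omega> ^ k) \<le> (real n * c)^k"
      using G by eventually_elim (metis real_norm_def power_abs power_mono abs_ge_zero SbP)
  qed (use Smeas in simp)
  have intY: "integrable M (\<lambda>\<omega>. Y i \<omega> ^ k)" for i k
  proof (rule integrable_const_bound[where B="c^k"])
    show "AE \<omega> in M. norm (Y i \<omega> ^ k) \<le> c^k"
      using bnd[of i] by eventually_elim (metis real_norm_def power_abs power_mono abs_ge_zero)
  qed (use meas in simp)
  have pw: "x ^ k \<le> c ^ k" if "\<bar>x\<bar> \<le> c" for x :: real and k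
    by (metis abs_ge_self abs_ge_zero order_trans power_abs power_mono that)
  have EYk: "expectation (\<lambda>\<omega>. Y i \<omega> ^ k) \<le> c^k" for i k
  proof -
    have "expectation (\<lambda>\<omega>. Y i \<omega> ^ k) \<le> expectation (\<lambda>\<omega>. c^k)"
      using bnd[of i] by (intro integral_mono_AE intY) (auto elim!: eventually_mono
          intro: pw)
    then show ?thesis by (simp add: prob_space)
  qed
  have EY2nn: "expectation (\<lambda>\<omega>. Y i \<omega> ^ 2) \<ge> 0" for i
    by (intro integral_nonneg_AE) auto
  have ES2nn: "expectation (\<lambda>\<omega>. S n \<omega> ^ 2) \<ge> 0" for n
    by (intro integral_nonneg_AE) auto
  have indep: "indep_var borel (\<lambda>\<omega>. Y (Suc n) \<omega> ^ p) borel (\<lambda>\<omega>. S n \<omega> ^ q)" for n p q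
  proof -
    have "indep_vars (\<lambda>_. borel) Y (insert (Suc n) {1..n})"
      by (rule indep_vars_subset[OF ind]) auto
    then have "indep_var borel (Y (Suc n)) borel (\<lambda>\<omega>. \<Sum>i\<in>{1..n}. Y i \<omega>)"
      by (intro indep_vars_sum) auto
    then have "indep_var borel ((\<lambda>x. x ^ p) \<circ> Y (Suc n)) borel ((\<lambda>x. x ^ q) \<circ> (\<lambda>\<omega>. \<Sum>i\<in>{1..n}. Y i \<omega>))"
      by (intro indep_var_compose) auto
    then show ?thesis by (simp add: comp_def S_def)
  qed
  have EYS: "expectation (\<lambda>\<omega>. Y (Suc n) \<omega> ^ p * S n \<omega> ^ q) =
      expectation (\<lambda>\<omega>. Y (Suc n) \<omega> ^ p) * expectation (\<lambda>\<omega>. S n \<omega> ^ q)" for n p q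
    by (rule indep_var_lebesgue_integral[OF indep intY intS])
  have intYS: "integrable M (\<lambda>\<omega>. Y (Suc n) \<omega> ^ p * S n \<omega> ^ q)" for n p q
    by (rule indep_var_integrable[OF indep intY intS])
  have ES1: "expectation (S n) = 0" for n
  proof -
    have "integrable M (Y i)" for i using intY[of i 1] by simp
    then show ?thesis unfolding S_def by (simp add: integral_sum mean0)
  qed
  have Ssuc: "S (Suc n) \<omega> = Y (Suc n) \<omega> + S n \<omega>" for n \<omega>
    unfolding S_def by (simp add: sum.cl_ivl_Suc)
  have m2: "expectation (\<lambda>\<omega>. S n \<omega> ^ 2) \<le> real n * c^2" for n
  proof (induction n)
    case 0 then show ?case by (simp add: S_def)
  next
    case (Suc n)
    have eq: "(\<lambda>\<omega>. S (Suc n) \<omega> ^ 2) = (\<lambda>\<omega>. Y (Suc n) \<omega> ^ 2 + (2 * (Y (Suc n) \<omega> ^ 1 * S n \<omega> ^ 1) + S n \<omega> ^ 2))"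
      by (auto simp: Ssuc power2_eq_square algebra_simps)
    have "expectation (\<lambda>\<omega>. S (Suc n) \<omega> ^ 2) = expectation (\<lambda>\<omega>. Y (Suc n) \<omega> ^ 2)
        + 2 * (expectation (\<lambda>\<omega>. Y (Suc n) \<omega> ^ 1) * expectation (\<lambda>\<omega>. S n \<omega> ^ 1)) + expectation (\<lambda>\<omega>. S n \<omega> ^ 2)"
      unfolding eq
      using intY intS intYS EYS intYS[of _ 1 1] EYS[of _ 1 1] intYS[of _ 3 1] EYS[of _ 3 1] intYS[of _ 1 3] EYS[of _ 1 3]
      by (simp add: integrable_add integral_add del: power_one_right)
    also have "\<dots> = expectation (\<lambda>\<omega>. Y (Suc n) \<omega> ^ 2) + expectation (\<lambda>\<omega>. S n \<omega> ^ 2)"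
      using ES1[of n] by simp
    also have "\<dots> \<le> c^2 + real n * c^2" using EYk Suc.IH by (intro add_mono) auto
    finally show ?case by (simp add: algebra_simps)
  qed
  have m4: "expectation (\<lambda>\<omega>. S n \<omega> ^ 4) \<le> 3 * (real n)^2 * c^4" for n
  proof (induction n)
    case 0 then show ?case by (simp add: S_def)
  next
    case (Suc n)
    have eq: "(\<lambda>\<omega>. S (Suc n) \<omega> ^ 4) = (\<lambda>\<omega>. Y (Suc n) \<omega> ^ 4 + (4 * (Y (Suc n) \<omega> ^ 3 * S n \<omega> ^ 1)
       + (6 * (Y (Suc n) \<omega> ^ 2 * S n \<omega> ^ 2) + (4 * (Y (Suc n) \<omega> ^ 1 * S n \<omega> ^ 3) + S n \<omega> ^ 4))))"
      by (auto simp: Ssuc power_def algebra_simps eval_nat_numeral)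
    have "expectation (\<lambda>\<omega>. S (Suc n) \<omega> ^ 4) = expectation (\<lambda>\<omega>. Y (Suc n) \<omega> ^ 4)
        + 4 * (expectation (\<lambda>\<omega>. Y (Suc n) \<omega> ^ 3) * expectation (\<lambda>\<omega>. S n \<omega> ^ 1))
        + 6 * (expectation (\<lambda>\<omega>. Y (Suc n) \<omega> ^ 2) * expectation (\<lambda>\<omega>. S n \<omega> ^ 2))
        + 4 * (expectation (\<lambda>\<omega>. Y (Suc n) \<omega> ^ 1) * expectation (\<lambda>\<omega>. S n \<omega> ^ 3))
        + expectation (\<lambda>\<omega>. S n \<omega> ^ 4)"
      unfolding eq
      using intY intS intYS EYS intYS[of _ 1 1] EYS[of _ 1 1] intYS[of _ 3 1] EYS[of _ 3 1] intYS[of _ 1 3] EYS[of _ 1 3]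
      by (simp add: integrable_add integral_add del: power_one_right)
    also have "\<dots> = expectation (\<lambda>\<omega>. Y (Suc n) \<omega> ^ 4)
        + 6 * (expectation (\<lambda>\<omega>. Y (Suc n) \<omega> ^ 2) * expectation (\<lambda>\<omega>. S n \<omega> ^ 2))
        + expectation (\<lambda>\<omega>. S n \<omega> ^ 4)"
      using ES1[of n] mean0[of "Suc n"] by simp
    also have "\<dots> \<le> c^4 + 6 * (c^2 * (real n * c^2)) + 3 * (real n)^2 * c^4"
      using EYk Suc.IH m2[of n] EY2nn[of "Suc n"] ES2nn[of n]
      by (intro add_mono mult_left_mono mult_mono) auto
    also have "\<dots> \<le> 3 * (real (Suc n))^2 * c^4"
      using c by (simp add: algebra_simps power2_eq_square) (simp add: power_def eval_nat_numeral)
    finally show ?case .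
  qed
  show ?thesis using m2 m4 unfolding S_def by auto
qed

lemma tendsto_pow4_zero:
  fixes x :: "nat \<Rightarrow> real"
  assumes "(\<lambda>n. x n ^ 4) \<longlonglongrightarrow> 0"
  shows "x \<longlonglongrightarrow> 0"
proof -
  have "(\<lambda>n. sqrt (sqrt (x n ^ 4))) \<longlonglongrightarrow> sqrt (sqrt 0)"
    by (intro tendsto_real_sqrt assms)
  moreover have "sqrt (sqrt (x n ^ 4)) = \<bar>x n\<bar>" for n
  proof -
    have "x n ^ 4 = (x n ^ 2) ^ 2" by (simp add: power_mult[symmetric])
    then have "sqrt (x n ^ 4) = x n ^ 2" using real_sqrt_abs[of "x n ^ 2"] by simp
    then show ?thesis by (simp add: real_sqrt_abs)
  qed
  ultimately have "(\<lambda>n. \<bar>x n\<bar>) \<longlonglongrightarrow> 0" by simp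
  then show ?thesis by (simp add: tendsto_rabs_zero_iff)
qed

lemma (in prob_space) slln_bounded:
  fixes Y :: "nat \<Rightarrow> 'a \<Rightarrow> real"
  assumes ind: "indep_vars (\<lambda>_. borel) Y UNIV"
    and meas: "\<And>i. Y i \<in> borel_measurable M"
    and bnd: "\<And>i. AE \<omega> in M. \<bar>Y i \<omega>\<bar> \<le> c"
    and mean0: "\<And>i. expectation (Y i) = 0"
    and c: "c \<ge> 0"
  shows "AE \<omega> in M. (\<lambda>n. (\<Sum>i\<in>{1..n}. Y i \<omega>) / real n) \<longlonglongrightarrow> 0"
proof -
  define S where "S n \<omega> = (\<Sum>i\<in>{1..n}. Y i \<omega>)" for n \<omega>
  define a where "a n \<omega> = (S n \<omega> / real n) ^ 4" for n \<omega>
  have Smeas: "S n \<in> borel_measurable M" for n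
    unfolding S_def using meas by (intro borel_measurable_sum) auto
  have ameas: "a n \<in> borel_measurable M" for n
    unfolding a_def using Smeas by measurable
  have G: "AE \<omega> in M. \<forall>i. \<bar>Y i \<omega>\<bar> \<le> c"
    using bnd by (simp add: AE_all_countable)
  have SbP: "\<bar>S n \<omega>\<bar> \<le> real n * c" if "\<forall>i. \<bar>Y i \<omega>\<bar> \<le> c" for n \<omega>
  proof -
    have "\<bar>S n \<omega>\<bar> \<le> (\<Sum>i\<in>{1..n}. \<bar>Y i \<omega>\<bar>)" unfolding S_def by (rule sum_abs)
    also have "\<dots> \<le> (\<Sum>i\<in>{1..n}. c)" using that by (intro sum_mono) auto
    finally show ?thesis by simp
  qed
  have intS: "integrable M (\<lambda>\<omega>. S n \<omega> ^ k)" for n k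
  proof (rule integrable_const_bound[where B="(real n * c)^k"])
    show "AE \<omega> in M. norm (S n \<omega> ^ k) \<le> (real n * c)^k"
      using G by eventually_elim (metis real_norm_def power_abs power_mono abs_ge_zero SbP)
  qed (use Smeas in simp)
  define b where "b n = 3 * c^4 * inverse (real n ^ 2)" for n
  have Ea: "expectation (a n) \<le> b n" for n
  proof (cases "n = 0")
    case True then show ?thesis by (simp add: a_def[abs_def] b_def)
  next
    case False
    have "expectation (a n) = expectation (\<lambda>\<omega>. S n \<omega> ^ 4) / real n ^ 4"
      unfolding a_def by (simp add: power_divide)
    also have "\<dots> \<le> 3 * (real n)^2 * c^4 / real n ^ 4"
      using slln_moments[OF assms, of n] unfolding S_def
      by (intro divide_right_mono) auto
    also have "\<dots> = b n" using False by (simp add: b_def field_simps eval_nat_numeral)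
    finally show ?thesis .
  qed
  have anonneg: "a n \<omega> \<ge> 0" for n \<omega> unfolding a_def by simp
  have inta: "integrable M (a n)" for n
    using integrable_divide[OF intS[of n 4], of "real n ^ 4"] unfolding a_def by (simp add: power_divide)
  have bsum: "summable b"
    unfolding b_def by (intro summable_mult inverse_power_summable) auto
  have bnn: "b n \<ge> 0" for n unfolding b_def by simp
  have "(\<integral>\<^sup>+ \<omega>. (\<Sum>n. ennreal (a n \<omega>)) \<partial>M) = (\<Sum>n. integral\<^sup>N M (\<lambda>\<omega>. ennreal (a n \<omega>)))"
    using ameas by (intro nn_integral_suminf) auto
  also have "\<dots> = (\<Sum>n. ennreal (expectation (a n)))"
    using inta anonneg by (simp add: nn_integral_eq_integral)
  also have "\<dots> \<le> (\<Sum>n. ennreal (b n))"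
    using Ea by (intro suminf_le summableI) (auto intro: ennreal_leI)
  also have "\<dots> = ennreal (\<Sum>n. b n)" using bsum bnn by (simp add: suminf_ennreal2)
  finally have fin: "(\<integral>\<^sup>+ \<omega>. (\<Sum>n. ennreal (a n \<omega>)) \<partial>M) \<noteq> \<infinity>"
    by (auto simp: top_unique)
  have "AE \<omega> in M. (\<Sum>n. ennreal (a n \<omega>)) \<noteq> \<infinity>"
    using ameas by (intro nn_integral_PInf_AE fin) auto
  then show ?thesis
  proof eventually_elim
    case (elim \<omega>)
    then have "summable (\<lambda>n. a n \<omega>)"
      using anonneg by (intro summable_suminf_not_top) auto
    then have "(\<lambda>n. a n \<omega>) \<longlonglongrightarrow> 0" by (rule summable_LIMSEQ_zero)
    then show ?case unfolding a_def S_def by (rule tendsto_pow4_zero)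
  qed
qed

lemma tendsto_by_components:
  fixes v :: "nat \<Rightarrow> 'v::euclidean_space"
  assumes "\<And>b. b \<in> Basis \<Longrightarrow> (\<lambda>n. v n \<bullet> b) \<longlonglongrightarrow> L \<bullet> b"
  shows "v \<longlonglongrightarrow> L"
proof -
  have "(\<lambda>n. \<Sum>b\<in>Basis. (v n \<bullet> b) *\<^sub>R b) \<longlonglongrightarrow> (\<Sum>b\<in>Basis. (L \<bullet> b) *\<^sub>R b)"
    using assms by (intro tendsto_sum tendsto_scaleR tendsto_const) auto
  then show ?thesis by (simp add: euclidean_representation)
qed

lemma slln_fun:
  fixes M :: "'a measure" and mu :: "'w::euclidean_space measure"
    and Z :: "nat \<Rightarrow> 'a \<Rightarrow> 'w" and f :: "'w \<Rightarrow> 'v::euclidean_space"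
  assumes M: "prob_space M"
    and Zm: "\<And>i. Z i \<in> borel_measurable M"
    and ind: "prob_space.indep_vars M (\<lambda>_. borel) Z UNIV"
    and dist: "\<And>i. distr M borel (Z i) = mu"
    and fm: "f \<in> borel_measurable borel"
    and fb: "AE z in mu. norm (f z) \<le> C"
  shows "AE \<omega> in M. (\<lambda>N. (1 / real N) *\<^sub>R (\<Sum>i=1..N. f (Z i \<omega>))) \<longlonglongrightarrow> integral\<^sup>L mu f"
proof -
  interpret prob_space M by (rule M)
  have mu_eq: "mu = distr M borel (Z 0)" using dist by simp
  interpret mu: prob_space mu unfolding mu_eq using Zm by (intro prob_space_distr) auto
  have smu: "sets mu = sets borel" unfolding mu_eq by simp
  have fmu: "f \<in> borel_measurable mu" using fm by (simp add: measurable_cong_sets[OF smu refl])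
  have fint: "integrable mu f" by (intro mu.integrable_const_bound[OF fb fmu])
  define m where "m = integral\<^sup>L mu f"
  have comp: "AE \<omega> in M. (\<lambda>n. (\<Sum>i\<in>{1..n}. f (Z i \<omega>) \<bullet> b) / real n) \<longlonglongrightarrow> m \<bullet> b"
    if b: "b \<in> Basis" for b
  proof -
    define Y where "Y i \<omega> = f (Z i \<omega>) \<bullet> b - m \<bullet> b" for i \<omega>
    have gm: "(\<lambda>z. f z \<bullet> b - m \<bullet> b) \<in> borel_measurable borel" using fm by measurable
    have indY: "indep_vars (\<lambda>_. borel) Y UNIV"
      unfolding Y_def using indep_vars_compose2[OF ind, of "\<lambda>_ z. f z \<bullet> b - m \<bullet> b" "\<lambda>_. borel"] gm
      by simp
    have Ym: "Y i \<in> borel_measurable M" for i unfolding Y_def using Zm[of i] fm by measurable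
    have bndP: "\<bar>f z \<bullet> b - m \<bullet> b\<bar> \<le> \<bar>C\<bar> + norm m" if "norm (f z) \<le> C" for z
    proof -
      have "\<bar>f z \<bullet> b - m \<bullet> b\<bar> \<le> \<bar>f z \<bullet> b\<bar> + \<bar>m \<bullet> b\<bar>" by linarith
      also have "\<dots> \<le> norm (f z) + norm m"
        using b by (intro add_mono) (auto intro: order_trans[OF Basis_le_norm])
      finally show ?thesis using that by linarith
    qed
    have Yb: "AE \<omega> in M. \<bar>Y i \<omega>\<bar> \<le> \<bar>C\<bar> + norm m" for i
    proof -
      have "AE z in distr M borel (Z i). \<bar>f z \<bullet> b - m \<bullet> b\<bar> \<le> \<bar>C\<bar> + norm m"
        using fb unfolding dist[of i, symmetric] by eventually_elim (rule bndP)
      from AE_distrD[OF _ this] Zm[of i] show ?thesis unfolding Y_def by simp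
    qed
    have Ymean: "expectation (Y i) = 0" for i
    proof -
      have intfb: "integrable M (\<lambda>\<omega>. f (Z i \<omega>) \<bullet> b)"
        using fint unfolding dist[of i, symmetric]
        by (subst (asm) integrable_distr_eq) (use Zm[of i] fm in auto)
      have "expectation (\<lambda>\<omega>. f (Z i \<omega>) \<bullet> b) = integral\<^sup>L (distr M borel (Z i)) (\<lambda>z. f z \<bullet> b)"
        using Zm[of i] fm by (subst integral_distr) auto
      also have "\<dots> = m \<bullet> b" unfolding dist m_def using fint by simp
      finally show ?thesis unfolding Y_def using intfb by (simp add: prob_space)
    qed
    have "AE \<omega> in M. (\<lambda>n. (\<Sum>i\<in>{1..n}. Y i \<omega>) / real n) \<longlonglongrightarrow> 0"
      by (rule slln_bounded[OF indY Ym Yb Ymean]) auto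
    then show ?thesis
    proof eventually_elim
      case (elim \<omega>)
      have "(\<lambda>n. (\<Sum>i\<in>{1..n}. Y i \<omega>) / real n + m \<bullet> b) \<longlonglongrightarrow> 0 + m \<bullet> b"
        by (intro tendsto_add elim tendsto_const)
      moreover have "\<forall>\<^sub>F n in sequentially. (\<Sum>i\<in>{1..n}. Y i \<omega>) / real n + m \<bullet> b =
          (\<Sum>i\<in>{1..n}. f (Z i \<omega>) \<bullet> b) / real n"
        using eventually_ge_at_top[of 1]
        by eventually_elim (simp add: Y_def sum_subtractf field_simps)
      ultimately show ?case by (simp add: tendsto_cong)
    qed
  qed
  have "AE \<omega> in M. \<forall>b\<in>Basis. (\<lambda>n. (\<Sum>i\<in>{1..n}. f (Z i \<omega>) \<bullet> b) / real n) \<longlonglongrightarrow> m \<bullet> b"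
    by (intro AE_finite_allI comp) auto
  then show ?thesis unfolding m_def[symmetric]
  proof eventually_elim
    case (elim \<omega>)
    show ?case
      by (rule tendsto_by_components)
         (use elim in \<open>simp add: inner_sum_left divide_inverse mult.commute\<close>)
  qed
qed



lemma avg_norm_bound:
  fixes a :: "nat \<Rightarrow> 'x::real_normed_vector"
  assumes "\<And>i. norm (a i) \<le> e" "e \<ge> 0"
  shows "norm ((1 / real N) *\<^sub>R (\<Sum>i=1..N. a i)) \<le> e"
proof (cases "N = 0")
  case True then show ?thesis using assms by simp
next
  case False
  have "norm (\<Sum>i=1..N. a i) \<le> (\<Sum>i=1..N. norm (a i))" by (rule norm_sum)
  also have "\<dots> \<le> (\<Sum>i=1..N. e)" using assms by (intro sum_mono) auto
  finally have "norm (\<Sum>i=1..N. a i) \<le> real N * e" by simp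
  then show ?thesis using False by (simp add: field_simps)
qed

lemma unif_avg:
  fixes \<phi> :: "'w::metric_space \<Rightarrow> 'w \<Rightarrow> 'x::real_normed_vector" and x :: "nat \<Rightarrow> 'w"
  assumes equi: "\<And>\<epsilon>. \<epsilon> > 0 \<Longrightarrow> \<exists>\<delta>>0. \<forall>z\<in>C. \<forall>z'\<in>C. dist z z' < \<delta> \<longrightarrow>
        (\<forall>s\<in>C. dist (\<phi> z s) (\<phi> z' s) \<le> \<epsilon>) \<and> dist (\<Phi> z) (\<Phi> z') \<le> \<epsilon>"
    and xC: "\<And>i. x i \<in> C"
    and net: "\<And>\<delta>. \<delta> > 0 \<Longrightarrow> \<exists>T. finite T \<and> T \<subseteq> D \<and> (\<forall>z\<in>C. \<exists>d\<in>T. dist z d < \<delta>)"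
    and DC: "D \<subseteq> C"
    and conv: "\<And>d. d \<in> D \<Longrightarrow> (\<lambda>N. (1 / real N) *\<^sub>R (\<Sum>i=1..N. \<phi> d (x i))) \<longlonglongrightarrow> \<Phi> d"
    and e: "\<epsilon> > 0"
  shows "\<forall>\<^sub>F N in sequentially. \<forall>z\<in>C. dist ((1 / real N) *\<^sub>R (\<Sum>i=1..N. \<phi> z (x i))) (\<Phi> z) < \<epsilon>"
proof -
  define avg where "avg N z = (1 / real N) *\<^sub>R (\<Sum>i=1..N. \<phi> z (x i))" for N z
  obtain \<delta> where d: "\<delta> > 0" and d': "\<And>z z'. z \<in> C \<Longrightarrow> z' \<in> C \<Longrightarrow> dist z z' < \<delta> \<Longrightarrow>
        (\<forall>s\<in>C. dist (\<phi> z s) (\<phi> z' s) \<le> \<epsilon>/4) \<and> dist (\<Phi> z) (\<Phi> z') \<le> \<epsilon>/4"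
    using equi[of "\<epsilon>/4"] e by auto
  obtain T where T: "finite T" "T \<subseteq> D" "\<And>z. z \<in> C \<Longrightarrow> \<exists>d\<in>T. dist z d < \<delta>"
    using net[OF d] by auto
  have "\<forall>\<^sub>F N in sequentially. \<forall>d\<in>T. dist (avg N d) (\<Phi> d) < \<epsilon>/4"
  proof (intro eventually_ball_finite ballI T(1))
    fix d assume "d \<in> T" then have "d \<in> D" using T(2) by auto
    show "\<forall>\<^sub>F N in sequentially. dist (avg N d) (\<Phi> d) < \<epsilon>/4"
      using tendstoD[OF conv[OF \<open>d \<in> D\<close>], of "\<epsilon>/4"] e unfolding avg_def by simp
  qed
  then show ?thesis
  proof eventually_elim
    case (elim N)
    show ?case
    proof
      fix z assume z: "z \<in> C"
      obtain dd where dd: "dd \<in> T" "dist z dd < \<delta>" using T(3)[OF z] by auto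
      have ddC: "dd \<in> C" using dd T(2) DC by auto
      have 1: "dist (avg N z) (avg N dd) \<le> \<epsilon>/4"
      proof -
        have "avg N z - avg N dd = (1 / real N) *\<^sub>R (\<Sum>i=1..N. \<phi> z (x i) - \<phi> dd (x i))"
          unfolding avg_def by (simp add: sum_subtractf scaleR_diff_right)
        moreover have "norm (\<phi> z (x i) - \<phi> dd (x i)) \<le> \<epsilon>/4" for i
          using d'[OF z ddC dd(2)] xC[of i] by (simp add: dist_norm)
        moreover have "norm ((1 / real N) *\<^sub>R (\<Sum>i=1..N. \<phi> z (x i) - \<phi> dd (x i))) \<le> \<epsilon>/4"
          by (rule avg_norm_bound) (use calculation e in auto)
        ultimately show ?thesis by (simp only: dist_norm)
      qed
      have 2: "dist (\<Phi> dd) (\<Phi> z) \<le> \<epsilon>/4"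
        using d'[OF z ddC dd(2)] by (simp add: dist_commute)
      have "dist (avg N z) (\<Phi> z) \<le> dist (avg N z) (avg N dd) + dist (avg N dd) (\<Phi> dd) + dist (\<Phi> dd) (\<Phi> z)"
        by (meson dist_triangle order_trans add_right_mono)
      also have "\<dots> < \<epsilon>"
      proof -
        have "dist (avg N dd) (\<Phi> dd) < \<epsilon>/4" using elim dd(1) by auto
        then show ?thesis using 1 2 e by linarith
      qed
      finally show "dist ((1 / real N) *\<^sub>R (\<Sum>i=1..N. \<phi> z (x i))) (\<Phi> z) < \<epsilon>"
        unfolding avg_def .
    qed
  qed
qed

lemma quot_unif:
  fixes g :: "nat \<Rightarrow> 'w \<Rightarrow> real" and h :: "nat \<Rightarrow> 'w \<Rightarrow> 'x::real_normed_vector"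
  assumes ug: "\<And>\<epsilon>. \<epsilon> > 0 \<Longrightarrow> \<forall>\<^sub>F N in sequentially. \<forall>z\<in>C. dist (g N z) (G z) < \<epsilon>"
    and uh: "\<And>\<epsilon>. \<epsilon> > 0 \<Longrightarrow> \<forall>\<^sub>F N in sequentially. \<forall>z\<in>C. dist (h N z) (H z) < \<epsilon>"
    and Gc: "\<And>z. z \<in> C \<Longrightarrow> G z \<ge> c1" and c1: "c1 > 0"
    and Hc: "\<And>z. z \<in> C \<Longrightarrow> norm (H z) \<le> c2" and c2: "c2 \<ge> 0"
    and e: "\<epsilon> > 0"
  shows "\<forall>\<^sub>F N in sequentially. \<forall>z\<in>C. dist ((1 / g N z) *\<^sub>R h N z) ((1 / G z) *\<^sub>R H z) < \<epsilon>"
proof -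
  define \<eta> where "\<eta> = min (c1/2) (\<epsilon> * c1^2 / (2 * (c1 + c2) + 1))"
  have eta: "\<eta> > 0" using c1 c2 e unfolding \<eta>_def by auto
  have "\<forall>\<^sub>F N in sequentially. (\<forall>z\<in>C. dist (g N z) (G z) < \<eta>) \<and> (\<forall>z\<in>C. dist (h N z) (H z) < \<eta>)"
    using ug[OF eta] uh[OF eta] by (rule eventually_conj)
  then show ?thesis
  proof eventually_elim
    case (elim N)
    show ?case
    proof
      fix z assume z: "z \<in> C"
      define a where "a = g N z"
      define A where "A = G z"
      define b where "b = h N z"
      define B where "B = H z"
      have ga: "\<bar>a - A\<bar> < \<eta>" using elim z by (simp add: a_def A_def dist_real_def)
      have hb: "norm (b - B) < \<eta>" using elim z by (simp add: b_def B_def dist_norm)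
      have A1: "A \<ge> c1" using Gc[OF z] by (simp add: A_def)
      have "\<eta> \<le> c1/2" unfolding \<eta>_def by (rule min.cobounded1)
      then have a1: "a \<ge> c1/2" using ga A1 by (auto simp: abs_less_iff)
      have Bc: "norm B \<le> c2" using Hc[OF z] by (simp add: B_def)
      have eq: "(1/a) *\<^sub>R b - (1/A) *\<^sub>R B = (1/a) *\<^sub>R (b - B) + ((A - a) / (a * A)) *\<^sub>R B"
      proof -
        have s: "1/a - 1/A = (A - a)/(a*A)" using a1 A1 c1 by (simp add: field_simps)
        have "(1/a) *\<^sub>R b - (1/A) *\<^sub>R B = (1/a) *\<^sub>R (b - B) + (1/a - 1/A) *\<^sub>R B"
          by (simp add: algebra_simps)
        then show ?thesis by (simp only: s)
      qed
      have "norm ((1/a) *\<^sub>R b - (1/A) *\<^sub>R B) \<le> (1/a) * norm (b - B) + (\<bar>A - a\<bar> / (a * A)) * norm B"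
        unfolding eq using a1 A1 c1 by (intro order_trans[OF norm_triangle_ineq]) (simp add: abs_mult)
      also have "\<dots> \<le> (2/c1) * \<eta> + (\<eta> / (c1/2 * c1)) * c2"
      proof (intro add_mono mult_mono)
        show "1/a \<le> 2/c1" using a1 c1 by (simp add: field_simps)
        show "\<bar>A - a\<bar> / (a * A) \<le> \<eta> / (c1 / 2 * c1)"
          using ga a1 A1 c1 eta by (intro frac_le mult_mono) auto
      qed (use hb Bc c1 c2 eta a1 A1 in auto)
      also have "\<dots> = \<eta> * (2 * (c1 + c2)) / c1^2" using c1 by (simp add: field_simps power2_eq_square)
      also have "\<dots> < \<epsilon>"
      proof -
        have "\<eta> \<le> \<epsilon> * c1^2 / (2 * (c1 + c2) + 1)" unfolding \<eta>_def by simp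
        then have "\<eta> * (2 * (c1 + c2)) \<le> \<epsilon> * c1^2 / (2 * (c1 + c2) + 1) * (2 * (c1 + c2))"
          using c1 c2 by (intro mult_right_mono) auto
        also have "\<dots> < \<epsilon> * c1^2"
          using c1 c2 e by (simp add: field_simps)
        finally show ?thesis using c1 by (simp add: field_simps)
      qed
      finally show "dist ((1 / g N z) *\<^sub>R h N z) ((1 / G z) *\<^sub>R H z) < \<epsilon>"
        by (simp add: dist_norm a_def A_def b_def B_def)
    qed
  qed
qed



lemma kernel_int:
  fixes \<phi> :: "'w::euclidean_space \<Rightarrow> 'w \<Rightarrow> 'x::euclidean_space" and mu :: "'w measure"
  assumes mu: "prob_space mu" and smu: "sets mu = sets borel" and C: "compact C"
    and AEC: "AE s in mu. s \<in> C"
    and cont: "continuous_on UNIV (\<lambda>p. \<phi> (fst p) (snd p))"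
  shows "integrable mu (\<phi> z)"
proof -
  interpret mu: prob_space mu by (rule mu)
  have cz: "continuous_on UNIV (\<phi> z)"
  proof -
    have "continuous_on UNIV ((\<lambda>p. \<phi> (fst p) (snd p)) \<circ> (\<lambda>s. (z, s)))"
      by (intro continuous_on_compose continuous_intros continuous_on_subset[OF cont]) auto
    then show ?thesis by (simp add: comp_def)
  qed
  have m: "\<phi> z \<in> borel_measurable mu"
    using borel_measurable_continuous_onI[OF cz] by (simp add: measurable_cong_sets[OF smu refl])
  have "bounded (\<phi> z ` C)"
    by (intro compact_imp_bounded compact_continuous_image continuous_on_subset[OF cz] C) auto
  then obtain b where b: "\<And>s. s \<in> C \<Longrightarrow> norm (\<phi> z s) \<le> b" by (auto simp: bounded_iff)
  show ?thesis
    by (rule mu.integrable_const_bound[OF _ m, of b]) (use AEC b in \<open>auto elim: eventually_mono\<close>)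
qed

lemma kernel_meas:
  fixes \<phi> :: "'w::euclidean_space \<Rightarrow> 'w \<Rightarrow> 'x::euclidean_space" and mu :: "'w measure"
  assumes mu: "prob_space mu" and smu: "sets mu = sets borel"
    and cont: "continuous_on UNIV (\<lambda>p. \<phi> (fst p) (snd p))"
  shows "(\<lambda>z. integral\<^sup>L mu (\<phi> z)) \<in> borel_measurable borel"
proof -
  interpret mu: prob_space mu by (rule mu)
  have "sets (borel \<Otimes>\<^sub>M mu) = sets (borel \<Otimes>\<^sub>M borel :: ('w \<times> 'w) measure)"
    by (rule sets_pair_measure_cong) (auto simp: smu)
  also have "\<dots> = sets (borel :: ('w \<times> 'w) measure)" by (subst borel_prod) (rule refl)
  finally have s: "sets (borel \<Otimes>\<^sub>M mu) = sets (borel :: ('w \<times> 'w) measure)" .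
  have "(\<lambda>p. \<phi> (fst p) (snd p)) \<in> borel_measurable borel"
    by (rule borel_measurable_continuous_onI[OF cont])
  then have "case_prod \<phi> \<in> borel_measurable (borel \<Otimes>\<^sub>M mu)"
    by (simp add: measurable_cong_sets[OF s refl] case_prod_beta')
  then show ?thesis by (rule mu.borel_measurable_lebesgue_integral)
qed

lemma kernel_equi:
  fixes \<phi> :: "'w::euclidean_space \<Rightarrow> 'w \<Rightarrow> 'x::euclidean_space" and mu :: "'w measure"
  assumes mu: "prob_space mu" and smu: "sets mu = sets borel" and C: "compact C"
    and AEC: "AE s in mu. s \<in> C"
    and cont: "continuous_on UNIV (\<lambda>p. \<phi> (fst p) (snd p))"
    and e: "\<epsilon> > 0"
  shows "\<exists>\<delta>>0. \<forall>z\<in>C. \<forall>z'\<in>C. dist z z' < \<delta> \<longrightarrow>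
        (\<forall>s\<in>C. dist (\<phi> z s) (\<phi> z' s) \<le> \<epsilon>) \<and> dist (integral\<^sup>L mu (\<phi> z)) (integral\<^sup>L mu (\<phi> z')) \<le> \<epsilon>"
proof -
  interpret mu: prob_space mu by (rule mu)
  have "uniformly_continuous_on (C \<times> C) (\<lambda>p. \<phi> (fst p) (snd p))"
    by (intro compact_uniformly_continuous continuous_on_subset[OF cont] compact_Times C) auto
  then obtain d where d: "d > 0" and
    dd: "\<And>p p'. p \<in> C \<times> C \<Longrightarrow> p' \<in> C \<times> C \<Longrightarrow> dist p' p < d \<Longrightarrow>
       dist (\<phi> (fst p') (snd p')) (\<phi> (fst p) (snd p)) < \<epsilon>"
    using e unfolding uniformly_continuous_on_def by metis
  have int: "integrable mu (\<phi> z)" for z by (rule kernel_int[OF mu smu C AEC cont])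
  have main: "(\<forall>s\<in>C. dist (\<phi> z s) (\<phi> z' s) \<le> \<epsilon>) \<and> dist (integral\<^sup>L mu (\<phi> z)) (integral\<^sup>L mu (\<phi> z')) \<le> \<epsilon>"
    if z: "z \<in> C" and z': "z' \<in> C" and dz: "dist z z' < d" for z z'
  proof (intro conjI)
    have pt: "dist (\<phi> z s) (\<phi> z' s) \<le> \<epsilon>" if s: "s \<in> C" for s
    proof -
      have "dist (z, s) (z', s) = dist z z'" by (simp add: dist_Pair_Pair)
      then show ?thesis using dd[of "(z', s)" "(z, s)"] z z' s dz by (auto simp: dist_commute)
    qed
    then show "\<forall>s\<in>C. dist (\<phi> z s) (\<phi> z' s) \<le> \<epsilon>" by auto
    have "dist (integral\<^sup>L mu (\<phi> z)) (integral\<^sup>L mu (\<phi> z')) = norm (\<integral>s. \<phi> z s - \<phi> z' s \<partial>mu)"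
      by (simp add: dist_norm int integral_diff)
    also have "\<dots> \<le> (\<integral>s. norm (\<phi> z s - \<phi> z' s) \<partial>mu)" by (rule integral_norm_bound)
    also have "\<dots> \<le> (\<integral>s. \<epsilon> \<partial>mu)"
      using AEC pt int[of z] int[of z'] by (intro integral_mono_AE integrable_norm integrable_diff)
        (auto simp: dist_norm elim: eventually_mono)
    also have "\<dots> = \<epsilon>" by (simp add: mu.prob_space)
    finally show "dist (integral\<^sup>L mu (\<phi> z)) (integral\<^sup>L mu (\<phi> z')) \<le> \<epsilon>" .
  qed
  show ?thesis using d main by blast
qed

theorem mainTheorem4:
  fixes M :: "'a measure"
    and mu :: "'w::euclidean_space measure"
    and Q K :: "'w \<Rightarrow> 'k::euclidean_space"
    and V :: "'w \<Rightarrow> 'v::euclidean_space"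
    and Z :: "nat \<Rightarrow> 'a \<Rightarrow> 'w"
    and tau :: real
  assumes "prob_space M"
    and "tau > 0"
    and "linear Q" and "linear K" and "linear V"
    and "prob_space mu" and "sets mu = sets borel"
    and "\<exists>B. bounded B \<and> B \<in> sets mu \<and> emeasure mu B = 1"
    and "\<And>i. Z i \<in> borel_measurable M"
    and "prob_space.indep_vars M (\<lambda>_. borel) Z UNIV"
    and "\<And>i. distr M borel (Z i) = mu"
  shows "AE \<omega> in M.
    (\<lambda>N. (1 / real N) *\<^sub>R
       (\<Sum>j=1..N. (1 / (\<Sum>t=1..N. exp ((Q (Z j \<omega>) \<bullet> K (Z t \<omega>)) / tau))) *\<^sub>R
          (\<Sum>i=1..N. exp ((Q (Z j \<omega>) \<bullet> K (Z i \<omega>)) / tau) *\<^sub>R V (Z i \<omega>))))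
    \<longlonglongrightarrow>
    integral\<^sup>L mu (\<lambda>z. (1 / integral\<^sup>L mu (\<lambda>s. exp ((Q z \<bullet> K s) / tau))) *\<^sub>R
        integral\<^sup>L mu (\<lambda>z'. exp ((Q z \<bullet> K z') / tau) *\<^sub>R V z'))"
proof -
  note Mps = assms(1) and mups = assms(6) and smu = assms(7) and Zm = assms(9)
    and ind = assms(10) and dist = assms(11)
  interpret prob_space M by (rule Mps)
  interpret mu: prob_space mu by (rule mups)
  obtain B where B: "bounded B" "B \<in> sets mu" "emeasure mu B = 1" using assms(8) by blast
  obtain x0 r where Bsub: "B \<subseteq> cball x0 r" using B(1) bounded_subset_cball by blast
  define C where "C = cball x0 r"
  have Ccomp: "compact C" by (simp add: C_def)
  have "AE s in mu. s \<in> B"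
    using B(2,3) by (subst mu.AE_in_set_eq_1) (auto simp: mu.emeasure_eq_measure)
  then have AEC: "AE s in mu. s \<in> C" by eventually_elim (use Bsub C_def in auto)
  have bQ: "bounded_linear Q" using assms(3) by (simp add: linear_conv_bounded_linear)
  have bK: "bounded_linear K" using assms(4) by (simp add: linear_conv_bounded_linear)
  have bV: "bounded_linear V" using assms(5) by (simp add: linear_conv_bounded_linear)
  define k where "k z s = exp ((Q z \<bullet> K s) / tau)" for z s
  have kpos: "k z s > 0" for z s by (simp add: k_def)
  define kv where "kv z s = k z s *\<^sub>R V s" for z s
  have acont: "continuous_on UNIV (\<lambda>p::'w\<times>'w. (Q (fst p) \<bullet> K (snd p)) / tau)"
    using assms(2) by (intro continuous_intros bounded_linear.continuous_on[OF bQ] bounded_linear.continuous_on[OF bK]) auto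
  have kcont: "continuous_on UNIV (\<lambda>p. k (fst p) (snd p))"
    unfolding k_def by (intro continuous_on_exp acont)
  have kvcont: "continuous_on UNIV (\<lambda>p. kv (fst p) (snd p))"
    unfolding kv_def by (intro continuous_intros kcont bounded_linear.continuous_on[OF bV])
  have "bounded ((\<lambda>p::'w\<times>'w. (Q (fst p) \<bullet> K (snd p)) / tau) ` (C \<times> C))"
    by (intro compact_imp_bounded compact_continuous_image continuous_on_subset[OF acont]
        compact_Times Ccomp) auto
  then obtain A where A: "\<And>z s. z \<in> C \<Longrightarrow> s \<in> C \<Longrightarrow> \<bar>(Q z \<bullet> K s) / tau\<bar> \<le> A"
    by (auto simp: bounded_iff)
  have "bounded (V ` C)"
    by (intro compact_imp_bounded compact_continuous_image bounded_linear.continuous_on[OF bV] Ccomp)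
       (rule continuous_on_id)
  then obtain CV where CV: "CV > 0" "\<And>s. s \<in> C \<Longrightarrow> norm (V s) \<le> CV"
    by (auto simp: bounded_pos)
  define c1 where "c1 = exp (- A)"
  define c2 where "c2 = exp A * CV"
  have c1: "c1 > 0" by (simp add: c1_def)
  have c2: "c2 \<ge> 0" using CV by (simp add: c2_def)
  have Ab: "-A \<le> (Q z \<bullet> K s) / tau \<and> (Q z \<bullet> K s) / tau \<le> A" if "z \<in> C" "s \<in> C" for z s
    using A[OF that] unfolding abs_le_iff by linarith
  have klow: "k z s \<ge> c1" if "z \<in> C" "s \<in> C" for z s
    using Ab[OF that] unfolding k_def c1_def by simp
  have kup: "k z s \<le> exp A" if "z \<in> C" "s \<in> C" for z s
    using Ab[OF that] unfolding k_def by simp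
  have kvup: "norm (kv z s) \<le> c2" if "z \<in> C" "s \<in> C" for z s
  proof -
    have "norm (kv z s) = k z s * norm (V s)" by (simp add: kv_def k_def)
    also have "\<dots> \<le> exp A * CV" using kup[OF that] CV(2)[OF that(2)] c1 klow[OF that]
      by (intro mult_mono) auto
    finally show ?thesis by (simp add: c2_def)
  qed
  define G where "G z = integral\<^sup>L mu (k z)" for z
  define H where "H z = integral\<^sup>L mu (kv z)" for z
  define F where "F z = (1 / G z) *\<^sub>R H z" for z
  have kint: "integrable mu (k z)" for z by (rule kernel_int[OF mups smu Ccomp AEC kcont])
  have kvint: "integrable mu (kv z)" for z by (rule kernel_int[OF mups smu Ccomp AEC kvcont])
  have Gm: "G \<in> borel_measurable borel" unfolding G_def by (rule kernel_meas[OF mups smu kcont])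
  have Hm: "H \<in> borel_measurable borel" unfolding H_def by (rule kernel_meas[OF mups smu kvcont])
  have Fm: "F \<in> borel_measurable borel" unfolding F_def using Gm Hm by measurable
  have Glow: "G z \<ge> c1" if z: "z \<in> C" for z
  proof -
    have "(\<integral>s. c1 \<partial>mu) \<le> G z" unfolding G_def
      using AEC klow[OF z] by (intro integral_mono_AE kint) (auto elim: eventually_mono)
    then show ?thesis by (simp add: mu.prob_space)
  qed
  have Hup: "norm (H z) \<le> c2" if z: "z \<in> C" for z
  proof -
    have "norm (H z) \<le> (\<integral>s. norm (kv z s) \<partial>mu)" unfolding H_def by (rule integral_norm_bound)
    also have "\<dots> \<le> (\<integral>s. c2 \<partial>mu)"
      using AEC kvup[OF z] by (intro integral_mono_AE integrable_norm kvint) (auto elim: eventually_mono)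
    finally show ?thesis by (simp add: mu.prob_space)
  qed
  have Fb: "norm (F z) \<le> c2 / c1" if z: "z \<in> C" for z
  proof -
    have "norm (F z) = norm (H z) / G z" using Glow[OF z] c1 by (simp add: F_def)
    also have "\<dots> \<le> c2 / c1" using Glow[OF z] c1 Hup[OF z] c2 by (intro frac_le) auto
    finally show ?thesis .
  qed
  have "\<forall>m. \<exists>T. finite T \<and> T \<subseteq> C \<and> C \<subseteq> (\<Union>x\<in>T. ball x (1 / Suc m))"
    using seq_compact_imp_totally_bounded[OF compact_imp_seq_compact[OF Ccomp]] by simp
  then obtain T where T: "\<And>m. finite (T m)" "\<And>m. T m \<subseteq> C" "\<And>m. C \<subseteq> (\<Union>x\<in>T m. ball x (1 / Suc m))"
    by metis
  define D where "D = (\<Union>m. T m)"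
  have Dcount: "countable D" unfolding D_def
    by (rule countable_UN[OF countableI_type]) (simp add: countable_finite T(1))
  have DC: "D \<subseteq> C" unfolding D_def using T(2) by auto
  have net: "\<exists>T'. finite T' \<and> T' \<subseteq> D \<and> (\<forall>z\<in>C. \<exists>d\<in>T'. dist z d < \<delta>)" if d: "\<delta> > 0" for \<delta>
  proof -
    obtain m where m: "1 / real (Suc m) < \<delta>" using nat_approx_posE[OF d] by blast
    show ?thesis
    proof (intro exI[of _ "T m"] conjI ballI)
      show "finite (T m)" "T m \<subseteq> D" using T(1) by (auto simp: D_def)
      fix z assume "z \<in> C"
      then obtain x where "x \<in> T m" "dist x z < 1 / Suc m" using T(3)[of m] by auto
      then show "\<exists>d\<in>T m. dist z d < \<delta>" using m by (metis dist_commute order.strict_trans)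
    qed
  qed
  have evC: "AE \<omega> in M. \<forall>i. Z i \<omega> \<in> C"
  proof -
    have "AE \<omega> in M. Z i \<omega> \<in> C" for i
      using AE_distrD[of "Z i" M borel] Zm[of i] AEC unfolding dist[of i, symmetric] by auto
    then show ?thesis by (simp add: AE_all_countable)
  qed
  have evG: "AE \<omega> in M. \<forall>d\<in>D. (\<lambda>N. (1 / real N) *\<^sub>R (\<Sum>i=1..N. k d (Z i \<omega>))) \<longlonglongrightarrow> G d"
  proof (subst AE_ball_countable[OF Dcount], intro ballI)
    fix d assume "d \<in> D" then have d: "d \<in> C" using DC by auto
    have "continuous_on UNIV (k d)" unfolding k_def
      using assms(2) by (intro continuous_intros bounded_linear.continuous_on[OF bK]) auto
    then have km: "k d \<in> borel_measurable borel" by (rule borel_measurable_continuous_onI)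
    have "AE s in mu. norm (k d s) \<le> exp A"
      using AEC by eventually_elim (auto simp: abs_of_pos[OF kpos] intro: kup[OF d])
    from slln_fun[OF Mps Zm ind dist km this]
    show "AE \<omega> in M. (\<lambda>N. (1 / real N) *\<^sub>R (\<Sum>i=1..N. k d (Z i \<omega>))) \<longlonglongrightarrow> G d"
      by (simp add: G_def)
  qed
  have evH: "AE \<omega> in M. \<forall>d\<in>D. (\<lambda>N. (1 / real N) *\<^sub>R (\<Sum>i=1..N. kv d (Z i \<omega>))) \<longlonglongrightarrow> H d"
  proof (subst AE_ball_countable[OF Dcount], intro ballI)
    fix d assume "d \<in> D" then have d: "d \<in> C" using DC by auto
    have "continuous_on UNIV (kv d)" unfolding kv_def k_def
      using assms(2) by (intro continuous_intros bounded_linear.continuous_on[OF bK] bounded_linear.continuous_on[OF bV]) auto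
    then have km: "kv d \<in> borel_measurable borel" by (rule borel_measurable_continuous_onI)
    have "AE s in mu. norm (kv d s) \<le> c2"
      using AEC by eventually_elim (use kvup[OF d] in auto)
    from slln_fun[OF Mps Zm ind dist km this]
    show "AE \<omega> in M. (\<lambda>N. (1 / real N) *\<^sub>R (\<Sum>i=1..N. kv d (Z i \<omega>))) \<longlonglongrightarrow> H d"
      by (simp add: H_def)
  qed
  have evF: "AE \<omega> in M. (\<lambda>N. (1 / real N) *\<^sub>R (\<Sum>i=1..N. F (Z i \<omega>))) \<longlonglongrightarrow> integral\<^sup>L mu F"
  proof -
    have "AE s in mu. norm (F s) \<le> c2 / c1"
      using AEC by eventually_elim (use Fb in auto)
    from slln_fun[OF Mps Zm ind dist Fm this] show ?thesis .
  qed
  have equiG: "\<exists>\<delta>>0. \<forall>z\<in>C. \<forall>z'\<in>C. dist z z' < \<delta> \<longrightarrow>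
        (\<forall>s\<in>C. dist (k z s) (k z' s) \<le> \<epsilon>) \<and> dist (G z) (G z') \<le> \<epsilon>" if "\<epsilon> > 0" for \<epsilon>
    unfolding G_def by (rule kernel_equi[OF mups smu Ccomp AEC kcont that])
  have equiH: "\<exists>\<delta>>0. \<forall>z\<in>C. \<forall>z'\<in>C. dist z z' < \<delta> \<longrightarrow>
        (\<forall>s\<in>C. dist (kv z s) (kv z' s) \<le> \<epsilon>) \<and> dist (H z) (H z') \<le> \<epsilon>" if "\<epsilon> > 0" for \<epsilon>
    unfolding H_def by (rule kernel_equi[OF mups smu Ccomp AEC kvcont that])
  have "AE \<omega> in M. (\<lambda>N. (1 / real N) *\<^sub>R
       (\<Sum>j=1..N. (1 / (\<Sum>t=1..N. k (Z j \<omega>) (Z t \<omega>))) *\<^sub>R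
          (\<Sum>i=1..N. kv (Z j \<omega>) (Z i \<omega>)))) \<longlonglongrightarrow> integral\<^sup>L mu F"
    using evC evG evH evF
  proof eventually_elim
    case (elim \<omega>)
    define x where "x i = Z i \<omega>" for i
    have xC: "x i \<in> C" for i using elim(1) by (simp add: x_def)
    define g where "g N z = (1 / real N) *\<^sub>R (\<Sum>i=1..N. k z (x i))" for N z
    define h where "h N z = (1 / real N) *\<^sub>R (\<Sum>i=1..N. kv z (x i))" for N z
    have ug: "\<forall>\<^sub>F N in sequentially. \<forall>z\<in>C. dist (g N z) (G z) < \<epsilon>" if "\<epsilon> > 0" for \<epsilon>
      unfolding g_def
      by (rule unif_avg[where D=D, OF equiG xC net DC _ that])
         (use elim(2) in \<open>auto simp: x_def\<close>)
    have uh: "\<forall>\<^sub>F N in sequentially. \<forall>z\<in>C. dist (h N z) (H z) < \<epsilon>" if "\<epsilon> > 0" for \<epsilon>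
      unfolding h_def
      by (rule unif_avg[where D=D, OF equiH xC net DC _ that])
         (use elim(3) in \<open>auto simp: x_def\<close>)
    have uq: "\<forall>\<^sub>F N in sequentially. \<forall>z\<in>C. dist ((1 / g N z) *\<^sub>R h N z) (F z) < \<epsilon>" if "\<epsilon> > 0" for \<epsilon>
      unfolding F_def by (rule quot_unif[OF ug uh Glow c1 Hup c2 that])
    define E where "E N = (1 / real N) *\<^sub>R
       (\<Sum>j=1..N. (1 / (\<Sum>t=1..N. k (x j) (x t))) *\<^sub>R (\<Sum>i=1..N. kv (x j) (x i)))" for N
    define Fa where "Fa N = (1 / real N) *\<^sub>R (\<Sum>i=1..N. F (x i))" for N
    have Eeq: "E N = (1 / real N) *\<^sub>R (\<Sum>j=1..N. (1 / g N (x j)) *\<^sub>R h N (x j))" if N: "N \<noteq> 0" for N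
    proof -
      have "(1 / (\<Sum>t=1..N. k (x j) (x t))) *\<^sub>R (\<Sum>i=1..N. kv (x j) (x i)) = (1 / g N (x j)) *\<^sub>R h N (x j)" for j
        unfolding g_def h_def using N by (cases "(\<Sum>t=1..N. k (x j) (x t)) = 0") (auto simp: field_simps)
      then show ?thesis unfolding E_def by simp
    qed
    have "(\<lambda>N. E N - Fa N) \<longlonglongrightarrow> 0"
    proof (rule tendstoI)
      fix \<epsilon> :: real assume e: "\<epsilon> > 0"
      have "\<forall>\<^sub>F N in sequentially. (\<forall>z\<in>C. dist ((1 / g N z) *\<^sub>R h N z) (F z) < \<epsilon>/2) \<and> N \<ge> 1"
        using uq[of "\<epsilon>/2"] e eventually_ge_at_top[of 1] by (auto intro: eventually_conj)
      then show "\<forall>\<^sub>F N in sequentially. dist (E N - Fa N) 0 < \<epsilon>"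
      proof eventually_elim
        case (elim N)
        then have N: "N \<noteq> 0" by auto
        have "E N - Fa N = (1 / real N) *\<^sub>R (\<Sum>j=1..N. (1 / g N (x j)) *\<^sub>R h N (x j) - F (x j))"
          unfolding Eeq[OF N] Fa_def by (simp add: sum_subtractf scaleR_diff_right)
        moreover have "norm ((1 / real N) *\<^sub>R (\<Sum>j=1..N. (1 / g N (x j)) *\<^sub>R h N (x j) - F (x j))) \<le> \<epsilon>/2"
          by (rule avg_norm_bound) (use elim xC e in \<open>auto simp: dist_norm less_imp_le\<close>)
        ultimately have "norm (E N - Fa N) \<le> \<epsilon>/2" by (simp only:)
        then show ?case using e by (simp add: dist_norm)
      qed
    qed
    moreover have "Fa \<longlonglongrightarrow> integral\<^sup>L mu F" using elim(4) by (simp add: Fa_def[abs_def] x_def)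
    ultimately have "E \<longlonglongrightarrow> integral\<^sup>L mu F" by (rule Lim_transform[rotated])
    then show ?case by (simp add: E_def[abs_def] x_def)
  qed
  moreover have "F = (\<lambda>z. (1 / integral\<^sup>L mu (\<lambda>s. exp ((Q z \<bullet> K s) / tau))) *\<^sub>R
        integral\<^sup>L mu (\<lambda>z'. exp ((Q z \<bullet> K z') / tau) *\<^sub>R V z'))"
    by (simp add: fun_eq_iff F_def G_def H_def k_def[abs_def] kv_def[abs_def])
  ultimately show ?thesis
    by (simp add: k_def kv_def)
qed

end
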